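(* Let $b$ be a real number with $|b|>1$, let $r$ be a nonnegative integer, and let $(b_n)_{n\ge1}$ be a real sequence with $b_n\to b$. Then $$\lim_{n\to\infty}\frac1n\,{}_4F_3\!\left[\begin{matrix}1,\ n+\frac12,\ 1-n,\ b_nn+r\\ n+1,\ \frac32-n,\ b_nn+r+1\end{matrix};1\right]=\frac{2b}{b+1}\sqrt{\frac{b+1}{b-1}}\arctan\Big(\sqrt{\frac{b-1}{b+1}}\Big).$$
   Context: ${}_pF_q\left[\begin{matrix}a_1,\dots,a_p\\ b_1,\dots,b_q\end{matrix};z\right]=\sum_{k\ge0}\frac{(a_1)_k\cdots(a_p)_k}{(b_1)_k\cdots(b_q)_k}\frac{z^k}{k!}$ with $(a)_k=a(a+1)\cdots(a+k-1)$, $(a)_0=1$; here the series terminates because of the numerator parameter $1-n$, i.e. it is the finite sum over $0\le k\le n-1$. *)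

theory Defs
  imports Complex_Main
begin

definition hyp_term :: "real list \<Rightarrow> real list \<Rightarrow> real \<Rightarrow> nat \<Rightarrow> real" where
  "hyp_term as bs z k =
     (\<Prod>a\<leftarrow>as. pochhammer a k) / (\<Prod>b\<leftarrow>bs. pochhammer b k) * z ^ k / fact k"

text \<open>Terminating hypergeometric sum: the sum of the terms with 0 \<le> k \<le> N - 1
(used when some numerator parameter equals 1 - N, so all later terms vanish).\<close>
definition hyp_sum :: "real list \<Rightarrow> real list \<Rightarrow> real \<Rightarrow> nat \<Rightarrow> real" where
  "hyp_sum as bs z N = (\<Sum>k<N. hyp_term as bs z k)"

end

theory Submission
  imports Defs "HOL-Analysis.Analysis"
begin


definition ff :: "real \<Rightarrow> real \<Rightarrow> real" where
  "ff b x = b / (b + x) * sqrt (1 / ((1 + x) * (1 - x)))"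

definition FF :: "real \<Rightarrow> real \<Rightarrow> real" where
  "FF b x = - (2 * b / (b + 1)) * sqrt ((b + 1) / (b - 1)) * arctan (sqrt ((b - 1) / (b + 1)) * sqrt ((1 - x) / (1 + x)))"

lemma alg: "B\<noteq>0 \<Longrightarrow> X\<noteq>0 \<Longrightarrow> s\<noteq>0 \<Longrightarrow> q \<noteq>0 \<Longrightarrow> P \<noteq> 0 \<Longrightarrow>
  -(2*b/B)*(1/s)*(inverse (2*X/(B*P)) * (s*(inverse q/2*(-2/P^2)))) = b/X/(P*(q::real))"
  by (simp add: field_simps power2_eq_square)

lemma FF_deriv:
  assumes b: "\<bar>b\<bar> > 1" and x: "0 < x" "x < 1"
  shows "(FF b has_real_derivative ff b x) (at x)"
proof -
  define s where "s = sqrt ((b - 1) / (b + 1))"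
  define u where "u = (1 - x) / (1 + x)"
  define q where "q = sqrt u"
  have bp: "(b - 1) / (b + 1) > 0" using b by (cases "b > 0") (auto simp: divide_pos_pos divide_neg_neg)
  have s0: "s > 0" and s2: "s^2 = (b-1)/(b+1)" using bp by (auto simp: s_def)
  have sinv: "sqrt ((b + 1) / (b - 1)) = 1 / s" unfolding s_def using bp
    by (simp add: real_sqrt_divide)
  have u0: "u > 0" using x by (simp add: u_def)
  have q0: "q > 0" and q2: "q^2 = u" using u0 by (auto simp: q_def)
  have d1: "((\<lambda>x. (1-x)/(1+x)) has_real_derivative -2/(1+x)^2) (at x)"
    using x by (auto intro!: derivative_eq_intros simp: field_simps power2_eq_square)
  have d2: "((\<lambda>x. sqrt ((1-x)/(1+x))) has_real_derivative inverse q / 2 * (-2/(1+x)^2)) (at x)"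
    unfolding q_def using DERIV_chain2[OF DERIV_real_sqrt d1] u0 by (simp add: u_def)
  have d3: "((\<lambda>x. arctan (s * sqrt ((1-x)/(1+x)))) has_real_derivative
      inverse (1 + (s * q)^2) * (s * (inverse q / 2 * (-2/(1+x)^2)))) (at x)"
    using DERIV_chain2[OF DERIV_arctan DERIV_cmult[OF d2, of s]] by (simp add: q_def u_def)
  have d4: "(FF b has_real_derivative - (2 * b / (b + 1)) * (1 / s) * (inverse (1 + (s * q)^2) * (s * (inverse q / 2 * (-2/(1+x)^2))))) (at x)"
    unfolding FF_def sinv s_def[symmetric] using DERIV_cmult[OF d3, of "- (2 * b / (b + 1)) * (1 / s)"] by simp
  have qq: "(1+x)*q = sqrt((1+x)*(1-x))"
  proof -
    have "(1+x)*q = sqrt ((1+x)^2 * u)" using x unfolding q_def by (simp add: real_sqrt_mult)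
    also have "(1+x)^2 * u = (1+x)*(1-x)" using x by (simp add: u_def power2_eq_square)
    finally show ?thesis .
  qed
  have ffe: "ff b x = b / (b + x) / ((1+x)*q)"
    unfolding ff_def qq by (simp add: real_sqrt_divide)
  have bx: "b + x \<noteq> 0" using b x by auto
  have b1: "b + 1 \<noteq> 0" using b by auto
  have den: "1 + (s*q)^2 = 2*(b+x)/((b+1)*(1+x))"
  proof -
    have nz: "(b+1)*(1+x) \<noteq> 0" using x b1 by simp
    have "1 + (s*q)^2 = 1 + ((b-1)*(1-x))/((b+1)*(1+x))"
      by (simp add: power_mult_distrib s2 q2 u_def)
    also have "\<dots> = 2*(b+x)/((b+1)*(1+x))"
      using nz by (simp add: field_simps)
    finally show ?thesis .
  qed
  show ?thesis
  proof (rule DERIV_cong[OF d4])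
    show "- (2 * b / (b + 1)) * (1 / s) * (inverse (1 + (s * q)^2) * (s * (inverse q / 2 * (-2/(1+x)^2)))) = ff b x"
      unfolding den ffe by (rule alg) (use x b1 bx s0 q0 in auto)
  qed
qed
lemma ff_integral:
  assumes b: "\<bar>b\<bar> > 1"
  shows "set_integrable lborel {0<..<1} (ff b)"
    "(LINT x:{0<..<1}|lborel. ff b x) = 2 * b / (b + 1) * sqrt ((b + 1) / (b - 1)) * arctan (sqrt ((b - 1) / (b + 1)))"
proof -
  have bp: "(b - 1) / (b + 1) > 0" using b by (cases "b > 0") (auto simp: divide_pos_pos divide_neg_neg)
  have cont: "isCont (FF b) y" if "y > -1" for y
  proof -
    have "1 + y \<noteq> 0" using that by simp
    then show ?thesis unfolding FF_def by (intro continuous_intros)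
  qed
  have A: "((FF b \<circ> real_of_ereal) \<longlongrightarrow> FF b 0) (at_right (ereal 0))"
    unfolding ereal_tendsto_simps using cont[of 0] by (simp add: continuous_within isCont_def filterlim_at_split)
  have B: "((FF b \<circ> real_of_ereal) \<longlongrightarrow> FF b 1) (at_left (ereal 1))"
    unfolding ereal_tendsto_simps using cont[of 1] by (simp add: continuous_within isCont_def filterlim_at_split)
  have F1: "FF b 1 = 0" by (simp add: FF_def)
  have F0: "FF b 0 = - (2 * b / (b + 1) * sqrt ((b + 1) / (b - 1)) * arctan (sqrt ((b - 1) / (b + 1))))"
    by (simp add: FF_def)
  have pos: "0 \<le> ff b x" if "0 < x" "x < 1" for x
  proof -
    have "b / (b + x) > 0" using b that by (cases "b > 0") (auto simp: divide_pos_pos divide_neg_neg)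
    then show ?thesis unfolding ff_def using that by (intro mult_nonneg_nonneg) auto
  qed
  have bx: "b + x \<noteq> 0" if "0 < x" "x < 1" for x using b that by auto
  note R = interval_integral_FTC_nonneg[where a="ereal 0" and b="ereal 1" and F="FF b" and f="ff b", OF _ _ _ _ A B]
  have c1: "ereal 0 < ereal 1" by simp
  have c2: "\<And>x. ereal 0 < ereal x \<Longrightarrow> ereal x < ereal 1 \<Longrightarrow> DERIV (FF b) x :> ff b x"
    using FF_deriv b by auto
  have c3: "\<And>x. ereal 0 < ereal x \<Longrightarrow> ereal x < ereal 1 \<Longrightarrow> isCont (ff b) x"
    unfolding ff_def using bx by (intro continuous_intros) auto
  have c4: "AE x in lborel. ereal 0 < ereal x \<longrightarrow> ereal x < ereal 1 \<longrightarrow> 0 \<le> ff b x"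
    by (intro AE_I2 impI) (auto intro: pos)
  from R[OF c1 c2 c3 c4] show "set_integrable lborel {0<..<1} (ff b)"
    "(LINT x:{0<..<1}|lborel. ff b x) = 2 * b / (b + 1) * sqrt ((b + 1) / (b - 1)) * arctan (sqrt ((b - 1) / (b + 1)))"
    by (auto simp: interval_lebesgue_integral_def F1 F0)
qed

lemma dom_integral: "set_integrable lborel {0<..<1} (\<lambda>x. 1 / sqrt (1 - x))"
proof -
  define F where "F x = - 2 * sqrt (1 - x)" for x :: real
  have cont: "isCont F y" for y unfolding F_def by (intro continuous_intros)
  have A: "((F \<circ> real_of_ereal) \<longlongrightarrow> F 0) (at_right (ereal 0))"
    unfolding ereal_tendsto_simps using cont[of 0] by (simp add: continuous_within isCont_def filterlim_at_split)
  have B: "((F \<circ> real_of_ereal) \<longlongrightarrow> F 1) (at_left (ereal 1))"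
    unfolding ereal_tendsto_simps using cont[of 1] by (simp add: continuous_within isCont_def filterlim_at_split)
  note R = interval_integral_FTC_nonneg[where a="ereal 0" and b="ereal 1" and F="F" and f="\<lambda>x. 1 / sqrt (1 - x)", OF _ _ _ _ A B]
  have c1: "ereal 0 < ereal 1" by simp
  have c2: "\<And>x. ereal 0 < ereal x \<Longrightarrow> ereal x < ereal 1 \<Longrightarrow> DERIV F x :> 1 / sqrt (1 - x)"
  proof -
    fix x assume "ereal 0 < ereal x" "ereal x < ereal 1"
    then have x: "x < 1" by simp
    have d: "((\<lambda>x. 1 - x) has_real_derivative -1) (at x)" by (auto intro!: derivative_eq_intros)
    have "DERIV F x :> -2 * (inverse (sqrt (1 - x)) / 2 * -1)"
      unfolding F_def using DERIV_cmult[OF DERIV_chain2[OF DERIV_real_sqrt d], of "-2"] x by simp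
    then show "DERIV F x :> 1 / sqrt (1 - x)" by (simp add: inverse_eq_divide)
  qed
  have c3: "\<And>x. ereal 0 < ereal x \<Longrightarrow> ereal x < ereal 1 \<Longrightarrow> isCont (\<lambda>x. 1 / sqrt (1 - x)) x"
    by (intro continuous_intros) auto
  have c4: "AE x in lborel. ereal 0 < ereal x \<longrightarrow> ereal x < ereal 1 \<longrightarrow> 0 \<le> 1 / sqrt (1 - x)"
    by (intro AE_I2 impI) auto
  from R[OF c1 c2 c3 c4] show ?thesis by simp
qed


definition P1 :: "real \<Rightarrow> nat \<Rightarrow> real" where
  "P1 m k = (\<Prod>j<k. (m + 1/2 + real j) / (m + 1 + real j))"
definition P2 :: "real \<Rightarrow> nat \<Rightarrow> real" where
  "P2 m k = (\<Prod>j<k. (m - 1 - real j) / (m - 3/2 - real j))"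

lemma P1_poch: "P1 m k = pochhammer (m + 1/2) k / pochhammer (m + 1) k"
  unfolding P1_def pochhammer_prod prod_dividef[symmetric] atLeast0LessThan
  by (intro prod.cong) (auto simp: algebra_simps)

lemma P2_poch: "P2 m k = pochhammer (1 - m) k / pochhammer (3/2 - m) k"
proof -
  have "P2 m k = (\<Prod>j<k. (1 - m + real j) / (3/2 - m + real j))"
    unfolding P2_def
  proof (intro prod.cong refl)
    fix j assume "j \<in> {..<k}"
    have "(m - 1 - real j) = - (1 - m + real j)" "(m - 3/2 - real j) = - (3/2 - m + real j)" by simp_all
    then show "(m - 1 - real j) / (m - 3/2 - real j) = (1 - m + real j) / (3/2 - m + real j)"
      by (simp only: minus_divide_divide)
  qed
  then show ?thesis
    unfolding pochhammer_prod prod_dividef[symmetric] atLeast0LessThan by simp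
qed

lemma poch_ratio:
  fixes c :: real
  assumes "\<And>j. j \<le> k \<Longrightarrow> c + real j \<noteq> 0"
  shows "pochhammer c k / pochhammer (c + 1) k = c / (c + real k)"
proof -
  have nz: "pochhammer (c + 1) k \<noteq> 0"
  proof
    assume "pochhammer (c + 1) k = 0"
    then obtain j where j: "j < k" "c + 1 = - real j" by (auto simp: pochhammer_eq_0_iff)
    then have "c + real (Suc j) = 0" by simp
    with assms[of "Suc j"] j(1) show False by simp
  qed
  have "pochhammer c k * (c + real k) = c * pochhammer (c + 1) k"
    using pochhammer_Suc[of c k] pochhammer_rec[of c k] by simp
  then show ?thesis using nz assms[of k] by (simp add: field_simps)
qed

lemma alg4: "(A::real)*B*C*D / (E*F*G) / H = (A/H)*(B/E)*(C/F)*(D/G)"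
  by (simp add: divide_inverse inverse_mult_distrib ac_simps)

lemma term_eq:
  fixes n :: nat and c :: real
  assumes "\<And>j. j \<le> k \<Longrightarrow> c + real j \<noteq> 0"
  shows "hyp_term [1, real n + 1/2, 1 - real n, c] [real n + 1, 3/2 - real n, c + 1] 1 k
       = c / (c + real k) * P1 (real n) k * P2 (real n) k"
proof -
  have "hyp_term [1, real n + 1/2, 1 - real n, c] [real n + 1, 3/2 - real n, c + 1] 1 k
     = (pochhammer 1 k / fact k) * (pochhammer (real n + 1/2) k / pochhammer (real n + 1) k)
       * (pochhammer (1 - real n) k / pochhammer (3/2 - real n) k) * (pochhammer c k / pochhammer (c + 1) k)"
    unfolding hyp_term_def by (simp add: ac_simps)
  also have "\<dots> = c / (c + real k) * P1 (real n) k * P2 (real n) k"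
    using poch_ratio[OF assms] by (simp only: P1_poch P2_poch) (simp add: pochhammer_fact[symmetric] ac_simps)
  finally show ?thesis .
qed

lemma div_le_div: "(0::real) < b \<Longrightarrow> 0 < d \<Longrightarrow> a * d \<le> c * b \<Longrightarrow> a / b \<le> c / d"
  by (simp add: field_simps)

lemma P1_bounds:
  assumes m: "m > 0"
  shows "P1 m k > 0 \<and> m / (m + real k) \<le> (P1 m k)^2 \<and> (P1 m k)^2 \<le> (m + 1/2) / (m + real k + 1/2)"
proof (induction k)
  case 0
  then show ?case using m by (simp add: P1_def)
next
  case (Suc k)
  define p where "p = P1 m k"
  define t where "t = m + real k"
  define q where "q = (t + 1/2) / (t + 1)"
  have t0: "t > 0" using m by (simp add: t_def)
  have p0: "p > 0" and pl: "m / t \<le> p^2" and pu: "p^2 \<le> (m + 1/2) / (t + 1/2)"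
    using Suc.IH by (auto simp: p_def t_def)
  have PS: "P1 m (Suc k) = p * q" by (simp add: P1_def p_def q_def t_def algebra_simps)
  have q0: "q > 0" using t0 by (simp add: q_def)
  have ql: "t / (t + 1) \<le> q^2"
    unfolding q_def power_divide using t0 apply (intro div_le_div) apply simp apply simp by (simp add: power2_eq_square algebra_simps)
  have qu: "q^2 \<le> (t + 1/2) / (t + 3/2)"
    unfolding q_def power_divide using t0 apply (intro div_le_div) apply simp apply simp by (simp add: power2_eq_square algebra_simps)
  have e1: "m + real (Suc k) = t + 1" by (simp add: t_def)
  have "m / (m + real (Suc k)) = (m / t) * (t / (t + 1))" unfolding e1 using t0 by simp
  also have "\<dots> \<le> p^2 * q^2" using pl ql m t0 by (intro mult_mono) auto
  finally have L: "m / (m + real (Suc k)) \<le> (p*q)^2" by (simp add: power_mult_distrib)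
  have "(p*q)^2 = p^2 * q^2" by (simp add: power_mult_distrib)
  also have "\<dots> \<le> ((m + 1/2) / (t + 1/2)) * ((t + 1/2) / (t + 3/2))"
    using pu qu t0 m by (intro mult_mono) auto
  also have "\<dots> = (m + 1/2) / (m + real (Suc k) + 1/2)" unfolding e1 using t0
    by (simp add: add.assoc)
  finally have U: "(p*q)^2 \<le> (m + 1/2) / (m + real (Suc k) + 1/2)" .
  show ?case unfolding PS using L U p0 q0 by simp
qed

lemma P2_lower:
  assumes "real k + 1 \<le> m"
  shows "P2 m k > 0 \<and> (m - 1/2) / (m - real k - 1/2) \<le> (P2 m k)^2"
  using assms
proof (induction k)
  case 0
  then show ?case by (simp add: P2_def)
next
  case (Suc k)
  define p where "p = P2 m k"
  define u where "u = m - real k - 2"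
  define f where "f = (u + 1) / (u + 1/2)"
  have u0: "u \<ge> 0" using Suc.prems by (simp add: u_def)
  have p0: "p > 0" and pl: "(m - 1/2) / (u + 3/2) \<le> p^2"
    using Suc.IH Suc.prems by (auto simp: p_def u_def algebra_simps)
  have PS: "P2 m (Suc k) = p * f" by (simp add: P2_def p_def f_def u_def algebra_simps)
  have f0: "f > 0" using u0 by (simp add: f_def)
  have fl: "(u + 3/2) / (u + 1/2) \<le> f^2"
    unfolding f_def power_divide using u0 apply (intro div_le_div) apply simp apply simp by (simp add: power2_eq_square algebra_simps)
  have m0: "m - 1/2 > 0" using Suc.prems by simp
  have e1: "m - real (Suc k) - 1/2 = u + 1/2" by (simp add: u_def)
  have "(m - 1/2) / (m - real (Suc k) - 1/2) = ((m - 1/2) / (u + 3/2)) * ((u + 3/2) / (u + 1/2))"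
    unfolding e1 using u0 by simp
  also have "\<dots> \<le> p^2 * f^2" using pl fl m0 u0 by (intro mult_mono) auto
  finally have L: "(m - 1/2) / (m - real (Suc k) - 1/2) \<le> (p*f)^2" by (simp add: power_mult_distrib)
  show ?case unfolding PS using L p0 f0 by simp
qed

lemma P2_upper:
  assumes "real k + 2 \<le> m"
  shows "(P2 m k)^2 \<le> (m - 1) / (m - real k - 1)"
  using assms
proof (induction k)
  case 0
  then show ?case by (simp add: P2_def)
next
  case (Suc k)
  define p where "p = P2 m k"
  define u where "u = m - real k - 2"
  define f where "f = (u + 1) / (u + 1/2)"
  have u0: "u \<ge> 1" using Suc.prems by (simp add: u_def)
  have pu: "p^2 \<le> (m - 1) / (u + 1)"
    using Suc.IH Suc.prems by (auto simp: p_def u_def algebra_simps)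
  have PS: "P2 m (Suc k) = p * f" by (simp add: P2_def p_def f_def u_def algebra_simps)
  have fu: "f^2 \<le> (u + 1) / u"
    unfolding f_def power_divide using u0 apply (intro div_le_div) apply simp apply simp by (simp add: power2_eq_square algebra_simps)
  have m0: "m - 1 > 0" using Suc.prems by simp
  have "(p*f)^2 = p^2 * f^2" by (simp add: power_mult_distrib)
  also have "\<dots> \<le> ((m - 1) / (u + 1)) * ((u + 1) / u)"
    using pu fu u0 m0 by (intro mult_mono) auto
  also have "\<dots> = (m - 1) / (m - real (Suc k) - 1)"
  proof -
    have e1: "m - real (Suc k) - 1 = u" by (simp add: u_def)
    show ?thesis unfolding e1 using u0 by simp
  qed
  finally show ?case unfolding PS .
qed



definition gstep :: "(nat \<Rightarrow> nat \<Rightarrow> real) \<Rightarrow> nat \<Rightarrow> real \<Rightarrow> real" where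
  "gstep a n x = (\<Sum>k<n. a n k * indicator {real k / real n ..< real (Suc k) / real n} x)"

lemma Ico_mono_aux: "real k / real n \<le> (1 + real k) / real n"
  by (simp add: divide_right_mono)

lemma gstep_integrable: "integrable lborel (gstep a n)"
  unfolding gstep_def by (intro Bochner_Integration.integrable_sum) (auto simp: Ico_mono_aux)

lemma gstep_integral: "integral\<^sup>L lborel (gstep a n) = (1 / real n) * (\<Sum>k<n. a n k)"
proof (cases "n = 0")
  case True
  have "gstep a 0 = (\<lambda>x. 0)" by (simp add: gstep_def fun_eq_iff)
  then show ?thesis using True by simp
next
  case False
  have "integral\<^sup>L lborel (gstep a n) = (\<Sum>k<n. a n k * (real (Suc k) / real n - real k / real n))"
    unfolding gstep_def
    by (subst Bochner_Integration.integral_sum) (auto intro!: sum.cong simp: Ico_mono_aux)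
  also have "\<dots> = (\<Sum>k<n. a n k * (1 / real n))"
    by (intro sum.cong refl) (simp add: diff_divide_distrib[symmetric])
  also have "\<dots> = (1 / real n) * (\<Sum>k<n. a n k)" by (simp add: sum_distrib_left mult_ac)
  finally show ?thesis .
qed

lemma gstep_at:
  assumes n: "n > 0" and x: "0 \<le> x" "x < 1"
  shows "gstep a n x = a n (nat \<lfloor>x * real n\<rfloor>)"
proof -
  define K where "K = nat \<lfloor>x * real n\<rfloor>"
  have fl0: "\<lfloor>x * real n\<rfloor> \<ge> 0" using x by simp
  have Kn: "K < n"
  proof -
    have "x * real n < real n" using x n by simp
    then have "\<lfloor>x * real n\<rfloor> < int n" by (simp add: floor_less_iff)
    then show ?thesis unfolding K_def using fl0 by linarith
  qed
  have ind: "indicator {real k / real n ..< real (Suc k) / real n} x = (if k = K then 1 else (0::real))" for k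
  proof -
    have "x \<in> {real k / real n ..< real (Suc k) / real n} \<longleftrightarrow> real k \<le> x * real n \<and> x * real n < real k + 1"
      using n by (simp add: field_simps)
    also have "\<dots> \<longleftrightarrow> \<lfloor>x * real n\<rfloor> = int k" by (simp add: floor_eq_iff)
    also have "\<dots> \<longleftrightarrow> k = K" unfolding K_def using fl0 by linarith
    finally show ?thesis by (simp add: indicator_def)
  qed
  have "gstep a n x = (\<Sum>k<n. if k = K then a n k else 0)"
    unfolding gstep_def ind by (intro sum.cong) auto
  also have "\<dots> = a n K" using Kn by (simp add: sum.delta)
  finally show ?thesis unfolding K_def .
qed

lemma gstep_out:
  assumes "x < 0 \<or> x \<ge> 1"
  shows "gstep a n x = 0"
proof -
  have "indicator {real k / real n ..< real (Suc k) / real n} x = (0::real)" if "k < n" for k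
  proof -
    have "x \<notin> {real k / real n ..< real (Suc k) / real n}"
    proof
      assume xin: "x \<in> {real k / real n ..< real (Suc k) / real n}"
      have h0: "real k / real n \<ge> 0" by simp
      have h1: "real (Suc k) / real n \<le> 1" using that by (simp add: divide_le_eq_1)
      from xin have "real k / real n \<le> x" "x < real (Suc k) / real n" by auto
      then show False using h0 h1 assms by linarith
    qed
    then show ?thesis by simp
  qed
  then show ?thesis unfolding gstep_def by simp
qed

lemma P_dom:
  assumes n: "n \<ge> 2" and k: "k < n"
  shows "\<bar>P1 (real n) k * P2 (real n) k\<bar> \<le> 2 * sqrt (real n / (real n - real k))"
proof -
  define m where "m = real n"
  have m2: "m \<ge> 2" using n by (simp add: m_def)
  have km: "real k + 1 \<le> m" using k by (simp add: m_def)
  have m0: "m > 0" using m2 by simp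
  from P1_bounds[OF m0, of k] have p1: "P1 m k > 0" "(P1 m k)^2 \<le> (m + 1/2) / (m + real k + 1/2)" by auto
  have "(m + 1/2) / (m + real k + 1/2) \<le> 1" using m2 by (simp add: divide_le_eq)
  then have p1u: "(P1 m k)^2 \<le> 1" using p1(2) by linarith
  have p2: "P2 m k > 0" using P2_lower[OF km] by auto
  have p2u: "(P2 m k)^2 \<le> 4 * m / (m - real k)"
  proof (cases "real k + 2 \<le> m")
    case True
    have "(P2 m k)^2 \<le> (m - 1) / (m - real k - 1)" by (rule P2_upper[OF True])
    also have "\<dots> \<le> 4 * m / (m - real k)"
    proof (rule div_le_div)
      show "0 < m - real k - 1" "0 < m - real k" using True by auto
      have "(m - 1) * (m - real k) \<le> m * (m - real k)" using True by (intro mult_right_mono) auto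
      also have "\<dots> \<le> m * (2 * (m - real k - 1))" using True m2 by (intro mult_left_mono) auto
      also have "\<dots> \<le> 4 * m * (m - real k - 1)"
      proof -
        have h: "0 \<le> m * (m - real k - 1)" by (rule mult_nonneg_nonneg) (use True m2 in auto)
        have "m * (2 * (m - real k - 1)) = 2 * (m * (m - real k - 1))" "4 * m * (m - real k - 1) = 4 * (m * (m - real k - 1))"
          by simp_all
        then show ?thesis using h by linarith
      qed
      finally show "(m - 1) * (m - real k) \<le> 4 * m * (m - real k - 1)" .
    qed
    finally show ?thesis .
  next
    case False
    then have kk: "k = n - 2 + 1" using k m2 n unfolding m_def by linarith
    have "P2 m k = P2 m (n - 2) * ((m - 1 - real (n - 2)) / (m - 3/2 - real (n - 2)))"
      unfolding kk by (simp add: P2_def)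
    also have "(m - 1 - real (n - 2)) / (m - 3/2 - real (n - 2)) = 2"
      using n unfolding m_def by (simp add: of_nat_diff)
    finally have e: "P2 m k = 2 * P2 m (n - 2)" by simp
    have "(P2 m (n - 2))^2 \<le> (m - 1) / (m - real (n - 2) - 1)"
      by (rule P2_upper) (use n in \<open>simp add: m_def of_nat_diff\<close>)
    also have "\<dots> = m - 1" using n unfolding m_def by (simp add: of_nat_diff)
    finally have "(P2 m k)^2 \<le> 4 * (m - 1)" unfolding e by (simp add: power_mult_distrib)
    also have "\<dots> \<le> 4 * m / (m - real k)" using kk n unfolding m_def by (simp add: of_nat_diff)
    finally show ?thesis .
  qed
  have "(P1 m k * P2 m k)^2 \<le> 1 * (4 * m / (m - real k))"
    unfolding power_mult_distrib using p1u p2u by (intro mult_mono) auto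
  then have "P1 m k * P2 m k \<le> sqrt (4 * (m / (m - real k)))" by (intro real_le_rsqrt) simp
  also have "\<dots> = 2 * sqrt (m / (m - real k))" unfolding real_sqrt_mult by (simp add: real_sqrt_four)
  finally show ?thesis using p1 p2 unfolding m_def by simp
qed



definition cc :: "(nat \<Rightarrow> real) \<Rightarrow> nat \<Rightarrow> nat \<Rightarrow> real" where
  "cc bn r n = bn n * real n + real r"

definition aa :: "(nat \<Rightarrow> real) \<Rightarrow> nat \<Rightarrow> nat \<Rightarrow> nat \<Rightarrow> real" where
  "aa bn r n k = hyp_term [1, real n + 1/2, 1 - real n, bn n * real n + real r]
                    [real n + 1, 3/2 - real n, bn n * real n + real r + 1] 1 k"

lemma aa_eq:
  assumes "\<And>j. j \<le> k \<Longrightarrow> cc bn r n + real j \<noteq> 0"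
  shows "aa bn r n k = cc bn r n / (cc bn r n + real k) * P1 (real n) k * P2 (real n) k"
  unfolding aa_def using term_eq[of k "cc bn r n" n] assms unfolding cc_def by simp

lemma K_lim:
  assumes x: "0 \<le> x"
  shows "(\<lambda>n. real (nat \<lfloor>x * real n\<rfloor>) / real n) \<longlonglongrightarrow> x"
proof (rule tendsto_sandwich)
  show "eventually (\<lambda>n. x - 1 / real n \<le> real (nat \<lfloor>x * real n\<rfloor>) / real n) sequentially"
    using eventually_gt_at_top[of 0]
  proof eventually_elim
    case (elim n)
    have "x * real n - 1 \<le> real (nat \<lfloor>x * real n\<rfloor>)" using x by linarith
    then have "(x * real n - 1) / real n \<le> real (nat \<lfloor>x * real n\<rfloor>) / real n"
      by (intro divide_right_mono) auto
    then show ?case using elim by (simp add: field_simps)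
  qed
  show "eventually (\<lambda>n. real (nat \<lfloor>x * real n\<rfloor>) / real n \<le> x) sequentially"
    using eventually_gt_at_top[of 0]
  proof eventually_elim
    case (elim n)
    have e: "real (nat \<lfloor>x * real n\<rfloor>) = of_int \<lfloor>x * real n\<rfloor>" using x by simp
    have "real (nat \<lfloor>x * real n\<rfloor>) \<le> x * real n" unfolding e by (rule of_int_floor_le)
    then show ?case using elim by (simp add: divide_le_eq)
  qed
  show "(\<lambda>n. x - 1 / real n) \<longlonglongrightarrow> x"
    using tendsto_diff[OF tendsto_const lim_inverse_n'] by simp
qed (rule tendsto_const)

lemma good_eventually:
  assumes b: "\<bar>b\<bar> > 1" and lim: "bn \<longlonglongrightarrow> b"
  obtains N W where "W > 0" "N \<ge> 2"
    "\<And>n j. n \<ge> N \<Longrightarrow> j \<le> n \<Longrightarrow> cc bn r n + real j \<noteq> 0 \<and> 0 < cc bn r n / (cc bn r n + real j)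
        \<and> cc bn r n / (cc bn r n + real j) \<le> W"
proof -
  define \<delta> where "\<delta> = (\<bar>b\<bar> - 1) / 2"
  have d0: "\<delta> > 0" using b by (simp add: \<delta>_def)
  have "eventually (\<lambda>n. dist (bn n) b < \<delta>) sequentially" by (rule tendstoD[OF lim d0])
  then obtain N1 where N1: "\<And>n. n \<ge> N1 \<Longrightarrow> \<bar>bn n - b\<bar> < \<delta>"
    by (auto simp: eventually_sequentially dist_real_def)
  obtain N2 :: nat where N2: "2 * real r / \<delta> + 2 < real N2" using reals_Archimedean2 by blast
  define N where "N = max (max N1 N2) 2"
  define W where "W = 1 + 2 / \<delta>"
  have W1: "W \<ge> 1" using d0 by (simp add: W_def)
  have main: "cc bn r n + real j \<noteq> 0 \<and> 0 < cc bn r n / (cc bn r n + real j)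
        \<and> cc bn r n / (cc bn r n + real j) \<le> W" if n: "n \<ge> N" and j: "j \<le> n" for n j
  proof -
    define c where "c = cc bn r n"
    define nn where "nn = real n"
    have nn2: "nn \<ge> 2" using n by (simp add: nn_def N_def)
    have jn: "real j \<le> nn" using j by (simp add: nn_def)
    have bb: "\<bar>bn n - b\<bar> < \<delta>" using N1 n by (simp add: N_def)
    have "2 * real r / \<delta> < nn" using N2 n unfolding nn_def N_def by linarith
    then have rr: "2 * real r < \<delta> * nn" using d0 by (simp add: divide_less_eq mult.commute)
    show ?thesis
    proof (cases "b > 0")
      case True
      have "b - \<delta> < bn n" using bb by (simp add: abs_less_iff)
      moreover have "b - \<delta> = 1 + \<delta>" using True unfolding \<delta>_def by (simp add: field_simps)
      ultimately have "bn n \<ge> 1 + \<delta>" by simp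
      then have "bn n * nn \<ge> (1 + \<delta>) * nn" using nn2 by (intro mult_right_mono) auto
      moreover have "(1 + \<delta>) * nn > 0" using d0 nn2 by simp
      ultimately have c0: "c > 0" unfolding c_def cc_def nn_def by simp
      have cj: "c + real j > 0" using c0 by simp
      have le1: "c / (c + real j) \<le> 1" using c0 by (simp add: divide_le_eq)
      have g0: "c / (c + real j) > 0" using c0 cj by simp
      show ?thesis unfolding c_def[symmetric] using le1 g0 cj W1 by (intro conjI; linarith)
    next
      case False
      then have bneg: "b < -1" using b by simp
      have "bn n < b + \<delta>" using bb by (simp add: abs_less_iff)
      moreover have "b + \<delta> = -(1 + \<delta>)" using bneg unfolding \<delta>_def by (simp add: field_simps)
      ultimately have "bn n \<le> -(1 + \<delta>)" by simp
      then have "bn n * nn \<le> -(1 + \<delta>) * nn" using nn2 by (intro mult_right_mono) auto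
      then have cle: "c \<le> -(1 + \<delta>) * nn + real r" unfolding c_def cc_def nn_def by simp
      define y where "y = - c - real j"
      have yb: "y > \<delta> * nn / 2" using cle rr jn unfolding y_def by (simp add: algebra_simps)
      have "\<delta> * nn > 0" using d0 nn2 by simp
      then have y0: "y > 0" using yb by linarith
      have cj: "c + real j \<noteq> 0" using y0 unfolding y_def by simp
      have eq: "c / (c + real j) = 1 + real j / y"
      proof -
        have cy: "c + real j = - y" by (simp add: y_def)
        have "c / (c + real j) = (-c) / y" unfolding cy by simp
        also have "-c = y + real j" unfolding y_def by simp
        finally show ?thesis using y0 by (simp add: add_divide_distrib)
      qed
      have "real j / y \<le> 2 / \<delta>"
      proof (rule div_le_div)
        show "0 < y" "0 < \<delta>" using y0 d0 by auto
        have "real j * \<delta> \<le> nn * \<delta>" using jn d0 by (intro mult_right_mono) auto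
        also have "\<dots> \<le> 2 * y" using yb by (simp add: mult.commute)
        finally show "real j * \<delta> \<le> 2 * y" .
      qed
      moreover have "real j / y \<ge> 0" using y0 by simp
      ultimately show ?thesis using cj unfolding c_def[symmetric] eq W_def by simp
    qed
  qed
  show ?thesis
    by (rule that[of W N]) (use W1 main in \<open>auto simp: N_def\<close>)
qed

lemma pointwise:
  assumes b: "\<bar>b\<bar> > 1" and lim: "bn \<longlonglongrightarrow> b" and x: "0 < x" "x < 1"
    and good: "\<And>n j. n \<ge> N \<Longrightarrow> j \<le> n \<Longrightarrow> cc bn r n + real j \<noteq> 0"
  shows "(\<lambda>n. gstep (aa bn r) n x) \<longlonglongrightarrow> ff b x"
proof -
  define K where "K n = nat \<lfloor>x * real n\<rfloor>" for n
  define t where "t n = real (K n) / real n" for n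
  define d where "d n = cc bn r n / real n" for n
  define w where "w n = cc bn r n / (cc bn r n + real (K n))" for n
  define p1 where "p1 n = P1 (real n) (K n)" for n
  define p2 where "p2 n = P2 (real n) (K n)" for n
  have tlim: "t \<longlonglongrightarrow> x" unfolding t_def K_def using K_lim[of x] x by simp
  have Kle: "real (K n) \<le> x * real n" for n
  proof -
    have e: "real (K n) = of_int \<lfloor>x * real n\<rfloor>" using x unfolding K_def by simp
    show ?thesis unfolding e by (rule of_int_floor_le)
  qed
  have Kn: "K n < n" if "n > 0" for n
  proof -
    have "real (K n) < real n" using Kle[of n] x that by (smt (verit) mult_less_cancel_right2 of_nat_0_less_iff)
    then show ?thesis by simp
  qed
  have dlim: "d \<longlonglongrightarrow> b"
  proof -
    have "(\<lambda>n. bn n + real r * inverse (real n)) \<longlonglongrightarrow> b + real r * 0"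
      by (intro tendsto_intros lim lim_inverse_n)
    moreover have "eventually (\<lambda>n. bn n + real r * inverse (real n) = d n) sequentially"
      using eventually_gt_at_top[of 0] by eventually_elim (simp add: d_def cc_def field_simps)
    ultimately show ?thesis by (simp add: Lim_transform_eventually)
  qed
  have bx: "b + x \<noteq> 0" using b x by auto
  have wlim: "w \<longlonglongrightarrow> b / (b + x)"
  proof -
    have "(\<lambda>n. d n / (d n + t n)) \<longlonglongrightarrow> b / (b + x)"
      by (intro tendsto_intros dlim tlim bx)
    moreover have "eventually (\<lambda>n. d n / (d n + t n) = w n) sequentially"
      using eventually_gt_at_top[of 0]
    proof eventually_elim
      case (elim n)
      have "d n / (d n + t n) = (cc bn r n / real n) / ((cc bn r n + real (K n)) / real n)"
        unfolding d_def t_def by (simp add: add_divide_distrib)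
      also have "\<dots> = w n" unfolding w_def using elim by simp
      finally show ?case .
    qed
    ultimately show ?thesis by (simp add: Lim_transform_eventually)
  qed
  have inv0: "(\<lambda>n. 1 / real n) \<longlonglongrightarrow> 0" using lim_inverse_n by (simp add: inverse_eq_divide)
  have p1lim: "(\<lambda>n. (p1 n)^2) \<longlonglongrightarrow> 1 / (1 + x)"
  proof (rule tendsto_sandwich)
    show "(\<lambda>n. 1 / (1 + t n)) \<longlonglongrightarrow> 1 / (1 + x)"
      using x by (intro tendsto_intros tlim) auto
    show "(\<lambda>n. (1 + 1 / (2 * real n)) / (1 + t n + 1 / (2 * real n))) \<longlonglongrightarrow> 1 / (1 + x)"
    proof -
      have "(\<lambda>n. (1 + (1/2) * (1 / real n)) / (1 + t n + (1/2) * (1 / real n))) \<longlonglongrightarrow> (1 + (1/2) * 0) / (1 + x + (1/2) * 0)"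
        using x by (intro tendsto_intros tlim inv0) auto
      then show ?thesis by simp
    qed
    show "eventually (\<lambda>n. 1 / (1 + t n) \<le> (p1 n)^2) sequentially"
      using eventually_gt_at_top[of 0]
    proof eventually_elim
      case (elim n)
      have "1 / (1 + t n) = real n / (real n + real (K n))" using elim unfolding t_def by (simp add: field_simps)
      then show ?case using P1_bounds[of "real n" "K n"] elim unfolding p1_def by simp
    qed
    show "eventually (\<lambda>n. (p1 n)^2 \<le> (1 + 1 / (2 * real n)) / (1 + t n + 1 / (2 * real n))) sequentially"
      using eventually_gt_at_top[of 0]
    proof eventually_elim
      case (elim n)
      have e1: "1 + 1 / (2 * real n) = (real n + 1/2) / real n" using elim by (simp add: field_simps)
      have e2: "1 + t n + 1 / (2 * real n) = (real n + real (K n) + 1/2) / real n"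
        using elim unfolding t_def by (simp add: field_simps)
      have "(1 + 1 / (2 * real n)) / (1 + t n + 1 / (2 * real n)) = (real n + 1/2) / (real n + real (K n) + 1/2)"
        unfolding e1 e2 using elim by simp
      then show ?case using P1_bounds[of "real n" "K n"] elim unfolding p1_def by simp
    qed
  qed
  have x1: "1 - x \<noteq> 0" using x by simp
  obtain M :: nat where M: "2 / (1 - x) < real M" using reals_Archimedean2 by blast
  have K2: "real (K n) + 2 \<le> real n" if "n \<ge> M" for n
  proof -
    have "2 / (1 - x) < real n" using M that by (meson le_less_trans of_nat_le_iff not_le order.strict_trans1)
    then have "2 < (1 - x) * real n" using x by (simp add: divide_less_eq mult.commute)
    then show ?thesis using Kle[of n] by (simp add: algebra_simps)
  qed
  have p2lim: "(\<lambda>n. (p2 n)^2) \<longlonglongrightarrow> 1 / (1 - x)"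
  proof (rule tendsto_sandwich)
    show "(\<lambda>n. (1 - 1 / (2 * real n)) / (1 - t n - 1 / (2 * real n))) \<longlonglongrightarrow> 1 / (1 - x)"
    proof -
      have "(\<lambda>n. (1 - (1/2) * (1 / real n)) / (1 - t n - (1/2) * (1 / real n))) \<longlonglongrightarrow> (1 - (1/2) * 0) / (1 - x - (1/2) * 0)"
        using x1 by (intro tendsto_intros tlim inv0) auto
      then show ?thesis by simp
    qed
    show "(\<lambda>n. (1 - 1 / real n) / (1 - t n - 1 / real n)) \<longlonglongrightarrow> 1 / (1 - x)"
    proof -
      have "(\<lambda>n. (1 - 1 / real n) / (1 - t n - 1 / real n)) \<longlonglongrightarrow> (1 - 0) / (1 - x - 0)"
        using x1 by (intro tendsto_intros tlim inv0) auto
      then show ?thesis by simp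
    qed
    show "eventually (\<lambda>n. (1 - 1 / (2 * real n)) / (1 - t n - 1 / (2 * real n)) \<le> (p2 n)^2) sequentially"
      using eventually_gt_at_top[of 0]
    proof eventually_elim
      case (elim n)
      have e1: "1 - 1 / (2 * real n) = (real n - 1/2) / real n" using elim by (simp add: field_simps)
      have e2: "1 - t n - 1 / (2 * real n) = (real n - real (K n) - 1/2) / real n"
        using elim unfolding t_def by (simp add: field_simps)
      have "(1 - 1 / (2 * real n)) / (1 - t n - 1 / (2 * real n)) = (real n - 1/2) / (real n - real (K n) - 1/2)"
        unfolding e1 e2 using elim by simp
      moreover have "real (K n) + 1 \<le> real n" using Kn[OF elim] by simp
      ultimately show ?case using P2_lower[of "K n" "real n"] unfolding p2_def by simp
    qed
    show "eventually (\<lambda>n. (p2 n)^2 \<le> (1 - 1 / real n) / (1 - t n - 1 / real n)) sequentially"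
      using eventually_ge_at_top[of "max M 1"]
    proof eventually_elim
      case (elim n)
      then have n0: "n > 0" by simp
      have e1: "1 - 1 / real n = (real n - 1) / real n" using n0 by (simp add: field_simps)
      have e2: "1 - t n - 1 / real n = (real n - real (K n) - 1) / real n"
        using n0 unfolding t_def by (simp add: field_simps)
      have "(1 - 1 / real n) / (1 - t n - 1 / real n) = (real n - 1) / (real n - real (K n) - 1)"
        unfolding e1 e2 using n0 by simp
      moreover have "real (K n) + 2 \<le> real n" using K2 elim by simp
      ultimately show ?case using P2_upper[of "K n" "real n"] unfolding p2_def by simp
    qed
  qed
  have p1pos: "eventually (\<lambda>n. sqrt ((p1 n)^2) = p1 n) sequentially"
    using eventually_gt_at_top[of 0]
  proof eventually_elim
    case (elim n)
    then show ?case using P1_bounds[of "real n" "K n"] unfolding p1_def by simp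
  qed
  have p2pos: "eventually (\<lambda>n. sqrt ((p2 n)^2) = p2 n) sequentially"
    using eventually_gt_at_top[of 0]
  proof eventually_elim
    case (elim n)
    have "real (K n) + 1 \<le> real n" using Kn[OF elim] by simp
    then show ?case using P2_lower[of "K n" "real n"] unfolding p2_def by simp
  qed
  have p1l: "p1 \<longlonglongrightarrow> sqrt (1 / (1 + x))"
    by (rule Lim_transform_eventually[OF tendsto_real_sqrt[OF p1lim] p1pos])
  have p2l: "p2 \<longlonglongrightarrow> sqrt (1 / (1 - x))"
    by (rule Lim_transform_eventually[OF tendsto_real_sqrt[OF p2lim] p2pos])
  have prodlim: "(\<lambda>n. w n * p1 n * p2 n) \<longlonglongrightarrow> b / (b + x) * sqrt (1 / (1 + x)) * sqrt (1 / (1 - x))"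
    by (intro tendsto_intros wlim p1l p2l)
  have ffe: "b / (b + x) * sqrt (1 / (1 + x)) * sqrt (1 / (1 - x)) = ff b x"
  proof -
    have "sqrt (1 / (1 + x)) * sqrt (1 / (1 - x)) = sqrt (1 / (1 + x) * (1 / (1 - x)))"
      by (rule real_sqrt_mult[symmetric])
    also have "1 / (1 + x) * (1 / (1 - x)) = 1 / ((1 + x) * (1 - x))" by simp
    finally show ?thesis unfolding ff_def by (simp only: mult.assoc)
  qed
  have ev: "eventually (\<lambda>n. w n * p1 n * p2 n = gstep (aa bn r) n x) sequentially"
    using eventually_ge_at_top[of "max N 1"]
  proof eventually_elim
    case (elim n)
    then have n0: "n > 0" and nN: "n \<ge> N" by auto
    have "gstep (aa bn r) n x = aa bn r n (K n)" unfolding K_def using gstep_at[OF n0] x by simp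
    also have "\<dots> = w n * p1 n * p2 n" unfolding w_def p1_def p2_def
      using Kn[OF n0] by (intro aa_eq good[OF nN]) simp
    finally show ?case by simp
  qed
  show ?thesis using Lim_transform_eventually[OF prodlim ev] ffe by simp
qed



lemma bound_at:
  assumes x: "0 < x" "x < 1" and n: "n \<ge> 2"
    and good: "\<And>j. j \<le> n \<Longrightarrow> cc bn r n + real j \<noteq> 0 \<and> 0 < cc bn r n / (cc bn r n + real j)
        \<and> cc bn r n / (cc bn r n + real j) \<le> W"
  shows "\<bar>gstep (aa bn r) n x\<bar> \<le> 2 * W * (1 / sqrt (1 - x))"
proof -
  define K where "K = nat \<lfloor>x * real n\<rfloor>"
  have n0: "n > 0" using n by simp
  have Kle: "real K \<le> x * real n"
  proof -
    have e: "real K = of_int \<lfloor>x * real n\<rfloor>" using x unfolding K_def by simp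
    show ?thesis unfolding e by (rule of_int_floor_le)
  qed
  have xn: "x * real n < real n" using x n0 by simp
  have Kn: "K < n" using Kle xn by linarith
  have g: "gstep (aa bn r) n x = cc bn r n / (cc bn r n + real K) * (P1 (real n) K * P2 (real n) K)"
    unfolding K_def[symmetric] gstep_at[OF n0 less_imp_le[OF x(1)] x(2)]
    using Kn good by (subst aa_eq) (auto simp: K_def mult.assoc)
  have w: "\<bar>cc bn r n / (cc bn r n + real K)\<bar> \<le> W"
  proof -
    have "0 < cc bn r n / (cc bn r n + real K)" "cc bn r n / (cc bn r n + real K) \<le> W"
      using good[of K] Kn by auto
    then show ?thesis by (simp only: abs_of_pos)
  qed
  have p: "\<bar>P1 (real n) K * P2 (real n) K\<bar> \<le> 2 * sqrt (real n / (real n - real K))"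
    by (rule P_dom[OF n Kn])
  have q: "real n / (real n - real K) \<le> 1 / (1 - x)"
  proof (rule div_le_div)
    show "0 < real n - real K" "0 < 1 - x" using Kn x by auto
    show "real n * (1 - x) \<le> 1 * (real n - real K)" using Kle by (simp add: algebra_simps)
  qed
  have "sqrt (real n / (real n - real K)) \<le> sqrt (1 / (1 - x))" using q by simp
  also have "\<dots> = 1 / sqrt (1 - x)" by (simp add: real_sqrt_divide)
  finally have p2: "\<bar>P1 (real n) K * P2 (real n) K\<bar> \<le> 2 * (1 / sqrt (1 - x))" using p by linarith
  have "\<bar>gstep (aa bn r) n x\<bar> = \<bar>cc bn r n / (cc bn r n + real K)\<bar> * \<bar>P1 (real n) K * P2 (real n) K\<bar>"
    unfolding g by (simp add: abs_mult)
  also have "\<dots> \<le> W * (2 * (1 / sqrt (1 - x)))"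
  proof -
    have W0: "0 \<le> W" using w abs_ge_zero order_trans by blast
    show ?thesis using w p2 W0 by (intro mult_mono) auto
  qed
  finally show ?thesis by (simp add: mult.commute)
qed

theorem lemma18:
  fixes b :: real and r :: nat and bn :: "nat \<Rightarrow> real"
  assumes "\<bar>b\<bar> > 1"
    and "bn \<longlonglongrightarrow> b"
  shows "(\<lambda>n. (1 / real n) *
            hyp_sum [1, real n + 1/2, 1 - real n, bn n * real n + real r]
                    [real n + 1, 3/2 - real n, bn n * real n + real r + 1] 1 n)
         \<longlonglongrightarrow> 2 * b / (b + 1) * sqrt ((b + 1) / (b - 1)) * arctan (sqrt ((b - 1) / (b + 1)))"
proof -
  obtain N W where W0: "W > 0" and N2: "N \<ge> 2" and good:
    "\<And>n j. n \<ge> N \<Longrightarrow> j \<le> n \<Longrightarrow> cc bn r n + real j \<noteq> 0 \<and> 0 < cc bn r n / (cc bn r n + real j)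
        \<and> cc bn r n / (cc bn r n + real j) \<le> W"
    using good_eventually[OF assms] by metis
  define s where "s i = gstep (aa bn r) (i + N)" for i
  define hf where "hf x = indicator {0<..<1} x *\<^sub>R ff b x" for x :: real
  define wf where "wf x = indicator {0<..<1} x *\<^sub>R (2 * W * (1 / sqrt (1 - x)))" for x :: real
  have int_hf: "integrable lborel hf"
    using ff_integral(1)[OF assms(1)] unfolding set_integrable_def hf_def .
  have int_wf: "integrable lborel wf"
    using set_integrable_mult_right[of "2 * W" lborel "{0<..<1}" "\<lambda>x. 1 / sqrt (1 - x)"] dom_integral
    unfolding set_integrable_def wf_def by simp
  have lim_int: "(\<lambda>i. integral\<^sup>L lborel (s i)) \<longlonglongrightarrow> integral\<^sup>L lborel hf"
  proof (rule integral_dominated_convergence[where w=wf])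
    show "hf \<in> borel_measurable lborel" using int_hf by (rule borel_measurable_integrable)
    show "s i \<in> borel_measurable lborel" for i
      unfolding s_def by (rule borel_measurable_integrable[OF gstep_integrable])
    show "integrable lborel wf" by (rule int_wf)
    show "AE x in lborel. (\<lambda>i. s i x) \<longlonglongrightarrow> hf x"
      using AE_lborel_singleton[of 0]
    proof eventually_elim
      case (elim x)
      show ?case
      proof (cases "0 < x \<and> x < 1")
        case True
        have "(\<lambda>n. gstep (aa bn r) n x) \<longlonglongrightarrow> ff b x"
          using pointwise[OF assms True[THEN conjunct1] True[THEN conjunct2], of N r] good by blast
        then have "(\<lambda>i. gstep (aa bn r) (i + N) x) \<longlonglongrightarrow> ff b x"
          by (rule LIMSEQ_ignore_initial_segment)
        then show ?thesis using True unfolding s_def hf_def by simp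
      next
        case False
        then have "x < 0 \<or> x \<ge> 1" using elim by auto
        then have "s i x = 0" for i unfolding s_def by (rule gstep_out)
        moreover have "hf x = 0" using False unfolding hf_def by auto
        ultimately show ?thesis by simp
      qed
    qed
    show "AE x in lborel. norm (s i x) \<le> wf x" for i
      using AE_lborel_singleton[of 0]
    proof eventually_elim
      case (elim x)
      show ?case
      proof (cases "0 < x \<and> x < 1")
        case True
        have "\<bar>gstep (aa bn r) (i + N) x\<bar> \<le> 2 * W * (1 / sqrt (1 - x))"
          by (rule bound_at) (use True N2 good in auto)
        then show ?thesis using True unfolding s_def wf_def by simp
      next
        case False
        then have "x < 0 \<or> x \<ge> 1" using elim by auto
        then have "s i x = 0" unfolding s_def by (rule gstep_out)
        moreover have "wf x = 0" using False unfolding wf_def by auto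
        ultimately show ?thesis by simp
      qed
    qed
  qed
  have "integral\<^sup>L lborel hf = 2 * b / (b + 1) * sqrt ((b + 1) / (b - 1)) * arctan (sqrt ((b - 1) / (b + 1)))"
    using ff_integral(2)[OF assms(1)] unfolding set_lebesgue_integral_def hf_def .
  then have "(\<lambda>i. integral\<^sup>L lborel (gstep (aa bn r) (i + N)))
       \<longlonglongrightarrow> 2 * b / (b + 1) * sqrt ((b + 1) / (b - 1)) * arctan (sqrt ((b - 1) / (b + 1)))"
    using lim_int unfolding s_def by simp
  then have L: "(\<lambda>n. integral\<^sup>L lborel (gstep (aa bn r) n))
       \<longlonglongrightarrow> 2 * b / (b + 1) * sqrt ((b + 1) / (b - 1)) * arctan (sqrt ((b - 1) / (b + 1)))"
    by (rule LIMSEQ_offset)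
  have eq: "integral\<^sup>L lborel (gstep (aa bn r) n) = (1 / real n) *
            hyp_sum [1, real n + 1/2, 1 - real n, bn n * real n + real r]
                    [real n + 1, 3/2 - real n, bn n * real n + real r + 1] 1 n" for n
    unfolding gstep_integral hyp_sum_def aa_def ..
  show ?thesis using L unfolding eq .
qed


end
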